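(* Consider $n$ birds in $\mathbb{R}^d$ evolving noise-free by $x(t)=x(t-1)+v(t)$, $v(t+1)=(P\otimes I_d)v(t)$ ($t\ge1$), where the flocking network is a fixed connected graph $G$ for all $t$ and $P=I_n-CL$ is the corresponding fixed transition matrix. Let $\pi=(\mathrm{tr}\,C^{-1})^{-1}C^{-1}\mathbf{1}$, let $\Gamma=\lim_{t\to\infty}\bigl(-\mathbf{1}\pi^Tt+\sum_{s=0}^{t-1}P^s\bigr)$, let $\mathbf{m}_\pi[x(t)]=(\pi^T\otimes I_d)x(t)$ (the mass center), and let $x^r(t)=x(t)-(\mathbf{1}\otimes I_d)\mathbf{m}_\pi[x(t)]$. Then $x^r(t)$ converges to $x^r=((I_n-\mathbf{1}\pi^T)\otimes I_d)x(0)+(\Gamma\otimes I_d)v(1)$, and the mass center $\mathbf{m}_\pi[x(t)]$ moves in $\mathbb{R}^d$ at constant speed in a fixed direction.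
   Context: $G$ is a connected undirected graph without self-loops on $n$ vertices with degrees $d_i$ and Laplacian $L$; $C=\mathrm{diag}(c_1,\dots,c_n)$ with positive rationals $c_i$ of $O(\log n)$ bits and $c_id_i<1$. $\mathbf{1}$ is the all-ones vector. *)

theory Defs
  imports "HOL-Analysis.Analysis"
begin

text \<open>Graphs on vertex set {0..<n}: symmetric irreflexive edge relation E.
 Matrices are functions nat => nat => real, indexed by {0..<n}.\<close>

definition deg :: "nat \<Rightarrow> (nat \<Rightarrow> nat \<Rightarrow> bool) \<Rightarrow> nat \<Rightarrow> nat" where
  "deg n E i = card {j. j < n \<and> E i j}"

definition laplacian :: "nat \<Rightarrow> (nat \<Rightarrow> nat \<Rightarrow> bool) \<Rightarrow> nat \<Rightarrow> nat \<Rightarrow> real" where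
  "laplacian n E i j = (if i = j then real (deg n E i) else if E i j then -1 else 0)"

definition graph_connected :: "nat \<Rightarrow> (nat \<Rightarrow> nat \<Rightarrow> bool) \<Rightarrow> bool" where
  "graph_connected n E \<longleftrightarrow> n > 0 \<and>
     (\<forall>i<n. \<forall>j<n. (\<lambda>a b. a < n \<and> b < n \<and> E a b)\<^sup>*\<^sup>* i j)"

definition trans_mat :: "nat \<Rightarrow> (nat \<Rightarrow> nat \<Rightarrow> bool) \<Rightarrow> (nat \<Rightarrow> real) \<Rightarrow> nat \<Rightarrow> nat \<Rightarrow> real" where
  "trans_mat n E c i j = (if i = j then 1 else 0) - c i * laplacian n E i j"

definition mat_mult :: "nat \<Rightarrow> (nat \<Rightarrow> nat \<Rightarrow> real) \<Rightarrow> (nat \<Rightarrow> nat \<Rightarrow> real) \<Rightarrow> nat \<Rightarrow> nat \<Rightarrow> real" where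
  "mat_mult n A B i j = (\<Sum>k<n. A i k * B k j)"

fun mat_pow :: "nat \<Rightarrow> (nat \<Rightarrow> nat \<Rightarrow> real) \<Rightarrow> nat \<Rightarrow> nat \<Rightarrow> nat \<Rightarrow> real" where
  "mat_pow n A 0 = (\<lambda>i j. if i = j then 1 else 0)"
| "mat_pow n A (Suc s) = mat_mult n (mat_pow n A s) A"

definition pi_vec :: "nat \<Rightarrow> (nat \<Rightarrow> real) \<Rightarrow> nat \<Rightarrow> real" where
  "pi_vec n c i = (1 / c i) / (\<Sum>j<n. 1 / c j)"

definition Gamma_seq :: "nat \<Rightarrow> (nat \<Rightarrow> nat \<Rightarrow> bool) \<Rightarrow> (nat \<Rightarrow> real) \<Rightarrow> nat \<Rightarrow> nat \<Rightarrow> nat \<Rightarrow> real" where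
  "Gamma_seq n E c t i j = - pi_vec n c j * real t + (\<Sum>s<t. mat_pow n (trans_mat n E c) s i j)"

definition Gamma :: "nat \<Rightarrow> (nat \<Rightarrow> nat \<Rightarrow> bool) \<Rightarrow> (nat \<Rightarrow> real) \<Rightarrow> nat \<Rightarrow> nat \<Rightarrow> real" where
  "Gamma n E c i j = lim (\<lambda>t. Gamma_seq n E c t i j)"

definition mass_center :: "nat \<Rightarrow> (nat \<Rightarrow> real) \<Rightarrow> (nat \<Rightarrow> real ^ 'd) \<Rightarrow> real ^ 'd" where
  "mass_center n c x = (\<Sum>i<n. pi_vec n c i *\<^sub>R x i)"

end

theory Submission
  imports Defs
begin


lemma mat_mult_assoc:
  "mat_mult n (mat_mult n A B) C = mat_mult n A (mat_mult n B C)"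
  unfolding mat_mult_def fun_eq_iff
  by (simp add: sum_distrib_left sum_distrib_right mult.assoc, subst sum.swap, simp)

lemma mat_mult_cong:
  "(\<And>k. k < n \<Longrightarrow> A i k = A' i k) \<Longrightarrow> (\<And>k. k < n \<Longrightarrow> B k j = B' k j)
   \<Longrightarrow> mat_mult n A B i j = mat_mult n A' B' i j"
  unfolding mat_mult_def by (rule sum.cong) auto

lemma mat_pow_add:
  "j < n \<Longrightarrow> mat_pow n A (a + b) i j = mat_mult n (mat_pow n A a) (mat_pow n A b) i j"
proof (induction b arbitrary: j)
  case 0
  have "mat_mult n (mat_pow n A a) (mat_pow n A 0) i j = (\<Sum>k<n. if k = j then mat_pow n A a i k else 0)"
    unfolding mat_mult_def by (rule sum.cong) auto
  also have "\<dots> = mat_pow n A a i j" using 0 by (simp add: sum.delta)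
  finally show ?case by simp
next
  case (Suc b)
  have "mat_pow n A (a + Suc b) i j = mat_mult n (mat_pow n A (a + b)) A i j" by simp
  also have "\<dots> = mat_mult n (mat_mult n (mat_pow n A a) (mat_pow n A b)) A i j"
    by (rule mat_mult_cong) (auto intro: Suc.IH)
  also have "\<dots> = mat_mult n (mat_pow n A a) (mat_pow n A (Suc b)) i j"
    by (simp add: mat_mult_assoc)
  finally show ?case .
qed

lemma mat_pow_Suc_left:
  assumes "i < n" "j < n"
  shows "mat_pow n A (Suc s) i j = (\<Sum>k<n. A i k * mat_pow n A s k j)"
proof -
  have "mat_pow n A (1 + s) i j = mat_mult n (mat_pow n A 1) (mat_pow n A s) i j"
    by (rule mat_pow_add[OF assms(2)])
  also have "\<dots> = mat_mult n A (mat_pow n A s) i j"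
  proof (rule mat_mult_cong)
    fix k assume "k < n"
    have "mat_pow n A 1 i k = (\<Sum>l<n. (if i = l then 1 else 0) * A l k)"
      by (simp add: mat_mult_def)
    also have "\<dots> = (\<Sum>l<n. if i = l then A l k else 0)" by (rule sum.cong) auto
    also have "\<dots> = A i k" using assms by (simp add: sum.delta)
    finally show "mat_pow n A 1 i k = A i k" .
  qed auto
  finally show ?thesis by (simp add: mat_mult_def)
qed

lemma contract:
  fixes A :: "nat \<Rightarrow> real" and u :: "nat \<Rightarrow> real"
  assumes "\<And>k. k < n \<Longrightarrow> A k \<ge> \<delta>" "(\<Sum>k<n. A k) = 1"
    "\<And>k. k < n \<Longrightarrow> a \<le> u k" "\<And>k. k < n \<Longrightarrow> u k \<le> b"
  shows "(1 - real n * \<delta>) * a + \<delta> * (\<Sum>k<n. u k) \<le> (\<Sum>k<n. A k * u k)"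
    "(\<Sum>k<n. A k * u k) \<le> (1 - real n * \<delta>) * b + \<delta> * (\<Sum>k<n. u k)"
proof -
  have eq: "(\<Sum>k<n. A k * u k) = (\<Sum>k<n. (A k - \<delta>) * u k) + \<delta> * (\<Sum>k<n. u k)"
    by (simp add: algebra_simps sum.distrib sum_subtractf sum_distrib_left)
  have s: "(\<Sum>k<n. (A k - \<delta>)) = 1 - real n * \<delta>"
    using assms(2) by (simp add: sum_subtractf)
  have "(\<Sum>k<n. (A k - \<delta>) * a) \<le> (\<Sum>k<n. (A k - \<delta>) * u k)"
    using assms by (intro sum_mono mult_left_mono) auto
  moreover have "(\<Sum>k<n. (A k - \<delta>) * a) = (1 - real n * \<delta>) * a"
    using s by (simp add: sum_distrib_right[symmetric])
  ultimately show "(1 - real n * \<delta>) * a + \<delta> * (\<Sum>k<n. u k) \<le> (\<Sum>k<n. A k * u k)"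
    using eq by linarith
  have "(\<Sum>k<n. (A k - \<delta>) * u k) \<le> (\<Sum>k<n. (A k - \<delta>) * b)"
    using assms by (intro sum_mono mult_left_mono) auto
  moreover have "(\<Sum>k<n. (A k - \<delta>) * b) = (1 - real n * \<delta>) * b"
    using s by (simp add: sum_distrib_right[symmetric])
  ultimately show "(\<Sum>k<n. A k * u k) \<le> (1 - real n * \<delta>) * b + \<delta> * (\<Sum>k<n. u k)"
    using eq by linarith
qed

lemma geom_div_summable:
  fixes \<rho> :: real
  assumes "0 < \<rho>" "\<rho> < 1" "K > 0"
  shows "summable (\<lambda>s. \<rho> ^ (s div K))"
proof -
  define r where "r = root K \<rho>"
  have r0: "0 < r" and r1: "r < 1" using assms by (auto simp: r_def real_root_gt_zero)
  have rK: "r ^ K = \<rho>" using assms by (simp add: r_def)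
  have bound: "norm (\<rho> ^ (s div K)) \<le> (1 / \<rho>) * r ^ s" for s
  proof -
    have "s \<le> K * (s div K) + K"
      using mult_div_mod_eq[of K s] mod_less_divisor[OF assms(3), of s] by linarith
    then have "r ^ (K * (s div K) + K) \<le> r ^ s"
      using r0 r1 by (intro power_decreasing) auto
    moreover have "r ^ (K * (s div K) + K) = \<rho> ^ (s div K) * \<rho>"
      by (simp add: power_add power_mult rK mult.commute)
    ultimately show ?thesis using assms by (simp add: field_simps)
  qed
  have "summable (\<lambda>s. (1 / \<rho>) * r ^ s)"
    using r0 r1 by (intro summable_mult summable_geometric) auto
  then show ?thesis
    by (rule summable_comparison_test'[where N=0]) (use bound in auto)
qed



context
  fixes n :: nat and E :: "nat \<Rightarrow> nat \<Rightarrow> bool" and c :: "nat \<Rightarrow> real"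
  assumes irrefl: "\<And>i. \<not> E i i" and sym: "\<And>i j. E i j \<Longrightarrow> E j i"
    and conn: "graph_connected n E"
    and c_pos: "\<And>i. i < n \<Longrightarrow> c i > 0"
    and c_deg: "\<And>i. i < n \<Longrightarrow> c i * real (deg n E i) < 1"
begin

lemma n_pos: "n > 0" using conn graph_connected_def by auto

lemma count_eq: "(\<Sum>j<n. if E i j then 1 else (0::real)) = real (card {j. j < n \<and> E i j})"
proof -
  have "(\<Sum>j<n. if E i j then 1 else (0::real)) = (\<Sum>j\<in>{j\<in>{..<n}. E i j}. 1)"
    by (rule sum.inter_filter[symmetric]) simp
  also have "{j\<in>{..<n}. E i j} = {j. j < n \<and> E i j}" by auto
  finally show ?thesis by simp
qed

lemma lap_row: "i < n \<Longrightarrow> (\<Sum>j<n. laplacian n E i j) = 0"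
proof -
  assume i: "i < n"
  have "(\<Sum>j<n. laplacian n E i j) = (\<Sum>j<n. (if i = j then real (deg n E i) else 0) - (if E i j then 1 else 0))"
    by (rule sum.cong) (auto simp: laplacian_def irrefl)
  also have "\<dots> = real (deg n E i) - real (card {j. j < n \<and> E i j})"
    using i by (simp add: sum_subtractf count_eq sum.delta)
  also have "\<dots> = 0" by (simp add: deg_def)
  finally show ?thesis .
qed

lemma lap_col: "j < n \<Longrightarrow> (\<Sum>i<n. laplacian n E i j) = 0"
proof -
  assume j: "j < n"
  have "(\<Sum>i<n. laplacian n E i j) = (\<Sum>i<n. (if j = i then real (deg n E j) else 0) - (if E j i then 1 else 0))"
    by (rule sum.cong) (auto simp: laplacian_def irrefl dest: sym)
  also have "\<dots> = real (deg n E j) - real (card {i. i < n \<and> E j i})"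
    using j by (simp add: sum_subtractf count_eq sum.delta)
  also have "\<dots> = 0" by (simp add: deg_def)
  finally show ?thesis .
qed

lemma P_row: "i < n \<Longrightarrow> (\<Sum>j<n. trans_mat n E c i j) = 1"
  by (simp add: trans_mat_def sum_subtractf sum_distrib_left[symmetric] lap_row)

lemma P_nonneg: "i < n \<Longrightarrow> trans_mat n E c i j \<ge> 0"
  using c_pos[of i] c_deg[of i]
  by (auto simp: trans_mat_def laplacian_def)

lemma P_diag: "i < n \<Longrightarrow> trans_mat n E c i i > 0"
  using c_deg[of i] by (auto simp: trans_mat_def laplacian_def)

lemma P_edge: "i < n \<Longrightarrow> E i j \<Longrightarrow> trans_mat n E c i j > 0"
  using c_pos[of i] irrefl[of i] by (auto simp: trans_mat_def laplacian_def)

lemma T_pos: "(\<Sum>j<n. 1 / c j) > 0"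
  using n_pos c_pos by (intro sum_pos) auto

lemma pi_pos: "i < n \<Longrightarrow> pi_vec n c i > 0"
  using T_pos c_pos[of i] by (simp add: pi_vec_def)

lemma pi_sum: "(\<Sum>i<n. pi_vec n c i) = 1"
  using T_pos unfolding pi_vec_def by (subst sum_divide_distrib[symmetric]) simp

lemma pi_stat: "j < n \<Longrightarrow> (\<Sum>i<n. pi_vec n c i * trans_mat n E c i j) = pi_vec n c j"
proof -
  assume j: "j < n"
  define T where "T = (\<Sum>j<n. 1 / c j)"
  have "(\<Sum>i<n. pi_vec n c i * trans_mat n E c i j)
      = (\<Sum>i<n. (if i = j then pi_vec n c j else 0) - laplacian n E i j / T)"
  proof (rule sum.cong)
    fix i assume "i \<in> {..<n}"
    then have "c i > 0" using c_pos by auto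
    then show "pi_vec n c i * trans_mat n E c i j = (if i = j then pi_vec n c j else 0) - laplacian n E i j / T"
    proof -
      have T: "T > 0" unfolding T_def by (rule T_pos)
      show ?thesis using \<open>c i > 0\<close> T
        by (cases "i = j") (simp_all add: pi_vec_def trans_mat_def T_def[symmetric] field_simps)
    qed
  qed simp
  also have "\<dots> = pi_vec n c j"
    using j by (simp add: sum_subtractf sum_divide_distrib[symmetric] lap_col)
  finally show ?thesis .
qed

abbreviation "PP \<equiv> mat_pow n (trans_mat n E c)"

lemma pow_nonneg: "PP s i j \<ge> 0"
proof (induction s arbitrary: j)
  case (Suc s) then show ?case
    by (auto simp: mat_mult_def intro!: sum_nonneg mult_nonneg_nonneg P_nonneg)
qed simp

lemma pow_row: "i < n \<Longrightarrow> (\<Sum>j<n. PP s i j) = 1"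
proof (induction s)
  case 0 then show ?case by (simp add: sum.delta)
next
  case (Suc s)
  have "(\<Sum>j<n. PP (Suc s) i j) = (\<Sum>k<n. PP s i k * (\<Sum>j<n. trans_mat n E c k j))"
    by (simp add: mat_mult_def sum_distrib_left) (subst sum.swap, simp)
  also have "\<dots> = (\<Sum>k<n. PP s i k)" by (simp add: P_row)
  finally show ?case using Suc by simp
qed

lemma pow_le1: "i < n \<Longrightarrow> j < n \<Longrightarrow> PP s i j \<le> 1"
proof -
  assume "i < n" "j < n"
  then have "PP s i j \<le> (\<Sum>j<n. PP s i j)"
    by (intro member_le_sum) (auto simp: pow_nonneg)
  then show ?thesis using pow_row[OF \<open>i<n\<close>] by simp
qed

lemma pow_pi: "j < n \<Longrightarrow> (\<Sum>i<n. pi_vec n c i * PP s i j) = pi_vec n c j"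
proof (induction s arbitrary: j)
  case 0 then show ?case by (simp add: sum.delta if_distrib cong: if_cong)
next
  case (Suc s)
  have "(\<Sum>i<n. pi_vec n c i * PP (Suc s) i j)
      = (\<Sum>k<n. (\<Sum>i<n. pi_vec n c i * PP s i k) * trans_mat n E c k j)"
    by (simp add: mat_mult_def sum_distrib_left sum_distrib_right mult.assoc) (subst sum.swap, simp)
  also have "\<dots> = (\<Sum>k<n. pi_vec n c k * trans_mat n E c k j)"
    using Suc.IH by (intro sum.cong) auto
  finally show ?case using pi_stat Suc.prems by simp
qed

lemma pow_diag: "i < n \<Longrightarrow> PP m i i > 0"
proof (induction m)
  case (Suc m)
  have "PP m i i * trans_mat n E c i i \<le> PP (Suc m) i i"
    unfolding mat_pow.simps mat_mult_def using Suc.prems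
    by (intro member_le_sum[where f="\<lambda>k. PP m i k * trans_mat n E c k i"])
       (auto intro!: mult_nonneg_nonneg pow_nonneg P_nonneg)
  moreover have "PP m i i * trans_mat n E c i i > 0"
    using Suc P_diag by simp
  ultimately show ?case by linarith
qed simp

lemma pow_path:
  assumes "(\<lambda>a b. a < n \<and> b < n \<and> E a b)\<^sup>*\<^sup>* i j" "i < n"
  shows "\<exists>l. \<forall>m\<ge>l. PP m i j > 0"
  using assms(1)
proof (induction rule: rtranclp_induct)
  case base then show ?case using pow_diag assms(2) by blast
next
  case (step j k)
  then obtain l where l: "\<forall>m\<ge>l. PP m i j > 0" by blast
  have "\<forall>m\<ge>Suc l. PP m i k > 0"
  proof (intro allI impI)
    fix m assume "Suc l \<le> m"
    then obtain m' where m': "m = Suc m'" "m' \<ge> l" by (cases m) auto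
    have "PP m' i j * trans_mat n E c j k \<le> PP (Suc m') i k"
      unfolding mat_pow.simps mat_mult_def using step.hyps(2)
      by (intro member_le_sum[where f="\<lambda>q. PP m' i q * trans_mat n E c q k"])
         (auto intro!: mult_nonneg_nonneg pow_nonneg P_nonneg)
    moreover have "PP m' i j * trans_mat n E c j k > 0"
      using l m' step.hyps(2) P_edge by simp
    ultimately show "PP m i k > 0" unfolding m'(1) by linarith
  qed
  then show ?case by blast
qed

lemma uniform_K: "\<exists>K \<delta>. K > 0 \<and> \<delta> > 0 \<and> (\<forall>i<n. \<forall>j<n. PP K i j \<ge> \<delta>)"
proof -
  have "\<forall>p\<in>{..<n}\<times>{..<n}. \<exists>l. \<forall>m\<ge>l. PP m (fst p) (snd p) > 0"
    using pow_path conn unfolding graph_connected_def by auto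
  then have "\<exists>f. \<forall>p\<in>{..<n}\<times>{..<n}. \<forall>m\<ge>f p. PP m (fst p) (snd p) > 0"
    by (rule bchoice)
  then obtain f where f: "\<forall>p\<in>{..<n}\<times>{..<n}. \<forall>m\<ge>f p. PP m (fst p) (snd p) > 0"
    by (elim exE)
  define K where "K = Suc (\<Sum>p\<in>{..<n}\<times>{..<n}. f p)"
  have fK: "f p \<le> K" if "p \<in> {..<n}\<times>{..<n}" for p
  proof -
    have "f p \<le> (\<Sum>p\<in>{..<n}\<times>{..<n}. f p)" using that by (intro member_le_sum) auto
    then show ?thesis by (simp add: K_def)
  qed
  define \<delta> where "\<delta> = Min ((\<lambda>p. PP K (fst p) (snd p)) ` ({..<n}\<times>{..<n}))"
  have ne: "{..<n}\<times>{..<n} \<noteq> {}" using n_pos by auto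
  have allpos: "\<forall>x\<in>(\<lambda>p. PP K (fst p) (snd p)) ` ({..<n}\<times>{..<n}). x > 0"
  proof
    fix x assume "x \<in> (\<lambda>p. PP K (fst p) (snd p)) ` ({..<n}\<times>{..<n})"
    then obtain p where p: "p \<in> {..<n}\<times>{..<n}" "x = PP K (fst p) (snd p)" by blast
    then show "x > 0" using f fK[OF p(1)] by blast
  qed
  have "\<delta> > 0" unfolding \<delta>_def using ne allpos by (subst Min_gr_iff) simp_all
  moreover have "PP K i j \<ge> \<delta>" if "i < n" "j < n" for i j
    unfolding \<delta>_def by (rule Min_le) (use that in \<open>auto intro!: image_eqI[where x="(i, j)"]\<close>)
  ultimately show ?thesis by (intro exI[of _ K] exI[of _ \<delta>]) (auto simp: K_def)
qed

lemma gamma_summable: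
  assumes i: "i < n" and j: "j < n"
  shows "summable (\<lambda>s. PP s i j - pi_vec n c j)"
proof -
  obtain K \<delta> where K: "K > 0" and \<delta>: "\<delta> > 0" and Kd: "\<forall>i<n. \<forall>j<n. PP K i j \<ge> \<delta>"
    using uniform_K by blast
  define \<rho> where "\<rho> = max (1 - real n * \<delta>) (1/2)"
  have \<rho>0: "0 < \<rho>" by (simp add: \<rho>_def)
  have \<rho>1: "\<rho> < 1" using n_pos \<delta> by (simp add: \<rho>_def)
  define g where "g s k = PP s k j - pi_vec n c j" for s k
  have pij: "0 < pi_vec n c j" "pi_vec n c j \<le> 1"
  proof -
    show "0 < pi_vec n c j" using pi_pos j by simp
    have "pi_vec n c j \<le> (\<Sum>i<n. pi_vec n c i)"
      using j pi_pos by (intro member_le_sum) (auto intro: less_imp_le)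
    then show "pi_vec n c j \<le> 1" using pi_sum by simp
  qed
  have gstep: "g (K + m) k = (\<Sum>l<n. PP K k l * g m l)" if "k < n" for m k
  proof -
    have "g (K + m) k = mat_mult n (PP K) (PP m) k j - (\<Sum>l<n. PP K k l) * pi_vec n c j"
      using pow_row[OF that] by (simp add: g_def mat_pow_add[OF j])
    also have "\<dots> = (\<Sum>l<n. PP K k l * g m l)"
      by (simp add: mat_mult_def g_def algebra_simps sum_subtractf sum_distrib_right sum_distrib_left)
    finally show ?thesis .
  qed
  have gz: "(\<Sum>k<n. pi_vec n c k * g s k) = 0" for s
    using pow_pi[OF j, of s] pi_sum
    by (simp add: g_def algebra_simps sum_subtractf sum_distrib_right[symmetric])
  have bnd: "\<exists>a b. (\<forall>k<n. a \<le> g s k \<and> g s k \<le> b) \<and> b - a \<le> 2 * \<rho> ^ (s div K)" for s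
  proof (induction s rule: less_induct)
    case (less s)
    show ?case
    proof (cases "s < K")
      case True
      have "\<forall>k<n. -1 \<le> g s k \<and> g s k \<le> 1"
      proof (intro allI impI)
        fix k assume "k < n"
        then have "0 \<le> PP s k j" "PP s k j \<le> 1" using pow_nonneg pow_le1 j by auto
        then show "-1 \<le> g s k \<and> g s k \<le> 1" using pij by (simp add: g_def)
      qed
      then show ?thesis using True by (intro exI[of _ "-1"] exI[of _ 1]) simp
    next
      case False
      define m where "m = s - K"
      have sm: "s = K + m" using False by (simp add: m_def)
      have "m < s" using K sm by simp
      then obtain a b where ab: "\<forall>k<n. a \<le> g m k \<and> g m k \<le> b" and w: "b - a \<le> 2 * \<rho> ^ (m div K)"
        using less.IH by blast
      define S where "S = (\<Sum>l<n. g m l)"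
      have lo: "(1 - real n * \<delta>) * a + \<delta> * S \<le> g s k" and hi: "g s k \<le> (1 - real n * \<delta>) * b + \<delta> * S"
        if "k < n" for k
        using contract[where n=n and A="PP K k" and \<delta>=\<delta> and a=a and u="g m" and b=b] Kd that pow_row[OF that] ab
        unfolding sm gstep[OF that] S_def by auto
      have ba: "b - a \<ge> 0" using ab n_pos by force
      have "((1 - real n * \<delta>) * b + \<delta> * S) - ((1 - real n * \<delta>) * a + \<delta> * S)
            = (1 - real n * \<delta>) * (b - a)" by (simp add: algebra_simps)
      also have "\<dots> \<le> \<rho> * (b - a)" using ba by (intro mult_right_mono) (auto simp: \<rho>_def)
      also have "\<dots> \<le> \<rho> * (2 * \<rho> ^ (m div K))" using w \<rho>0 by (intro mult_left_mono) auto
      also have "\<dots> = 2 * \<rho> ^ (s div K)"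
        using K by (simp add: sm div_add_self1)
      finally show ?thesis using lo hi by blast
    qed
  qed
  have gb: "norm (g s i) \<le> 2 * \<rho> ^ (s div K)" for s
  proof -
    obtain a b where ab: "\<forall>k<n. a \<le> g s k \<and> g s k \<le> b" and w: "b - a \<le> 2 * \<rho> ^ (s div K)"
      using bnd by blast
    have "(\<Sum>k<n. pi_vec n c k * a) \<le> (\<Sum>k<n. pi_vec n c k * g s k)"
      using ab pi_pos by (intro sum_mono mult_left_mono) (auto intro: less_imp_le)
    then have a0: "a \<le> 0" using gz pi_sum by (simp add: sum_distrib_right[symmetric])
    have "(\<Sum>k<n. pi_vec n c k * g s k) \<le> (\<Sum>k<n. pi_vec n c k * b)"
      using ab pi_pos by (intro sum_mono mult_left_mono) (auto intro: less_imp_le)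
    then have b0: "0 \<le> b" using gz pi_sum by (simp add: sum_distrib_right[symmetric])
    show ?thesis using ab i a0 b0 w by auto
  qed
  have "summable (\<lambda>s. 2 * \<rho> ^ (s div K))"
    by (intro summable_mult geom_div_summable \<rho>0 \<rho>1 K)
  then have "summable (\<lambda>s. g s i)"
    by (rule summable_comparison_test'[where N=0]) (use gb in auto)
  then show ?thesis by (simp add: g_def)
qed

lemma gamma_conv:
  assumes i: "i < n" and j: "j < n"
  shows "(\<lambda>t. Gamma_seq n E c t i j) \<longlonglongrightarrow> (\<Sum>s. PP s i j - pi_vec n c j)"
proof -
  have "(\<lambda>t. \<Sum>s<t. PP s i j - pi_vec n c j) \<longlonglongrightarrow> (\<Sum>s. PP s i j - pi_vec n c j)"
    by (rule summable_LIMSEQ[OF gamma_summable[OF i j]])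
  moreover have "(\<Sum>s<t. PP s i j - pi_vec n c j) = Gamma_seq n E c t i j" for t
    by (simp add: Gamma_seq_def sum_subtractf)
  ultimately show ?thesis by simp
qed

end


theorem lemma3p11:
  fixes n :: nat and E :: "nat \<Rightarrow> nat \<Rightarrow> bool" and c :: "nat \<Rightarrow> real"
    and x v :: "nat \<Rightarrow> nat \<Rightarrow> real ^ 'd"
  assumes irrefl: "\<And>i. \<not> E i i"
    and sym: "\<And>i j. E i j \<Longrightarrow> E j i"
    and conn: "graph_connected n E"
    and c_rat: "\<And>i. i < n \<Longrightarrow> c i \<in> \<rat>"
    and c_pos: "\<And>i. i < n \<Longrightarrow> c i > 0"
    and c_deg: "\<And>i. i < n \<Longrightarrow> c i * real (deg n E i) < 1"
    and pos_step: "\<And>t i. t \<ge> 1 \<Longrightarrow> i < n \<Longrightarrow> x t i = x (t - 1) i + v t i"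
    and vel_step: "\<And>t i. t \<ge> 1 \<Longrightarrow> i < n \<Longrightarrow>
                     v (t + 1) i = (\<Sum>j<n. trans_mat n E c i j *\<^sub>R v t j)"
  shows "(\<forall>i<n. \<forall>j<n. (\<lambda>t. Gamma_seq n E c t i j) \<longlonglongrightarrow> Gamma n E c i j)
       \<and> (\<forall>i<n. (\<lambda>t. x t i - mass_center n c (x t))
              \<longlonglongrightarrow> (x 0 i - mass_center n c (x 0)
                   + (\<Sum>j<n. Gamma n E c i j *\<^sub>R v 1 j)))
       \<and> (\<exists>w :: real ^ 'd. \<forall>t. mass_center n c (x t) = mass_center n c (x 0) + real t *\<^sub>R w)"
  proof -
  let ?P = "trans_mat n E c"
  let ?Q = "mat_pow n (trans_mat n E c)"
  let ?\<pi> = "pi_vec n c"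
  have G: "(\<lambda>t. Gamma_seq n E c t i j) \<longlonglongrightarrow> Gamma n E c i j" if "i < n" "j < n" for i j
  proof -
    have "(\<lambda>t. Gamma_seq n E c t i j) \<longlonglongrightarrow> (\<Sum>s. ?Q s i j - ?\<pi> j)"
      by (rule gamma_conv[OF irrefl sym conn c_pos c_deg that])
    moreover then have "Gamma n E c i j = (\<Sum>s. ?Q s i j - ?\<pi> j)"
      unfolding Gamma_def by (rule limI)
    ultimately show ?thesis by simp
  qed
  have vform: "v (Suc s) i = (\<Sum>j<n. ?Q s i j *\<^sub>R v 1 j)" if "i < n" for s i
    using that
  proof (induction s arbitrary: i)
    case 0
    have "(\<Sum>j<n. ?Q 0 i j *\<^sub>R v 1 j) = (\<Sum>j<n. if i = j then v 1 j else 0)"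
      by (rule sum.cong) auto
    also have "\<dots> = v 1 i" using 0 by (simp add: sum.delta)
    finally show ?case by simp
  next
    case (Suc s)
    have "v (Suc (Suc s)) i = (\<Sum>k<n. ?P i k *\<^sub>R v (Suc s) k)"
      using vel_step[of "Suc s" i] Suc.prems by simp
    also have "\<dots> = (\<Sum>k<n. ?P i k *\<^sub>R (\<Sum>j<n. ?Q s k j *\<^sub>R v 1 j))"
      using Suc.IH by (intro sum.cong) auto
    also have "\<dots> = (\<Sum>j<n. (\<Sum>k<n. ?P i k * ?Q s k j) *\<^sub>R v 1 j)"
      by (simp add: scaleR_sum_right scaleR_sum_left) (subst sum.swap, simp)
    also have "\<dots> = (\<Sum>j<n. ?Q (Suc s) i j *\<^sub>R v 1 j)"
      using Suc.prems by (intro sum.cong) (simp_all add: mat_pow_Suc_left del: mat_pow.simps)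
    finally show ?case .
  qed
  define w where "w = (\<Sum>j<n. ?\<pi> j *\<^sub>R v 1 j)"
  have mv: "mass_center n c (v (Suc s)) = w" for s
  proof -
    have "mass_center n c (v (Suc s)) = (\<Sum>i<n. ?\<pi> i *\<^sub>R (\<Sum>j<n. ?Q s i j *\<^sub>R v 1 j))"
      unfolding mass_center_def using vform by (intro sum.cong) auto
    also have "\<dots> = (\<Sum>j<n. (\<Sum>i<n. ?\<pi> i * ?Q s i j) *\<^sub>R v 1 j)"
      by (simp add: scaleR_sum_right scaleR_sum_left) (subst sum.swap, simp)
    also have "\<dots> = w" unfolding w_def
      using pow_pi[OF irrefl sym conn c_pos c_deg] by (intro sum.cong) auto
    finally show ?thesis .
  qed
  have mx: "mass_center n c (x t) = mass_center n c (x 0) + real t *\<^sub>R w" for t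
  proof (induction t)
    case (Suc t)
    have "mass_center n c (x (Suc t)) = (\<Sum>i<n. ?\<pi> i *\<^sub>R (x t i + v (Suc t) i))"
      unfolding mass_center_def using pos_step[of "Suc t"] by (intro sum.cong) auto
    also have "\<dots> = mass_center n c (x t) + mass_center n c (v (Suc t))"
      by (simp add: mass_center_def scaleR_add_right sum.distrib)
    finally show ?case using Suc mv by (simp add: algebra_simps)
  qed simp
  have xform: "x t i = x 0 i + (\<Sum>s<t. \<Sum>j<n. ?Q s i j *\<^sub>R v 1 j)" if "i < n" for t i
  proof (induction t)
    case (Suc t)
    then show ?case using pos_step[of "Suc t" i] vform[OF that, of t] that by simp
  qed simp
  have eq: "x t i - mass_center n c (x t)
      = (x 0 i - mass_center n c (x 0)) + (\<Sum>j<n. Gamma_seq n E c t i j *\<^sub>R v 1 j)"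
    if "i < n" for t i
  proof -
    have "(\<Sum>j<n. Gamma_seq n E c t i j *\<^sub>R v 1 j)
        = (\<Sum>s<t. \<Sum>j<n. ?Q s i j *\<^sub>R v 1 j) - real t *\<^sub>R w"
    proof -
      have "(\<Sum>j<n. Gamma_seq n E c t i j *\<^sub>R v 1 j)
          = (\<Sum>j<n. (- (real t) *\<^sub>R (?\<pi> j *\<^sub>R v 1 j)) + (\<Sum>s<t. ?Q s i j *\<^sub>R v 1 j))"
        unfolding Gamma_seq_def by (intro sum.cong) (simp_all add: scaleR_add_left scaleR_diff_left scaleR_sum_left mult.commute)
      also have "\<dots> = (\<Sum>j<n. - (real t) *\<^sub>R (?\<pi> j *\<^sub>R v 1 j)) + (\<Sum>j<n. \<Sum>s<t. ?Q s i j *\<^sub>R v 1 j)"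
        by (rule sum.distrib)
      also have "\<dots> = - (real t *\<^sub>R w) + (\<Sum>s<t. \<Sum>j<n. ?Q s i j *\<^sub>R v 1 j)"
        unfolding w_def scaleR_sum_right[symmetric] by (subst sum.swap) simp
      finally show ?thesis by simp
    qed
    then show ?thesis using xform[OF that, of t] mx[of t] by (simp add: algebra_simps)
  qed
  have part2: "(\<lambda>t. x t i - mass_center n c (x t))
              \<longlonglongrightarrow> (x 0 i - mass_center n c (x 0) + (\<Sum>j<n. Gamma n E c i j *\<^sub>R v 1 j))"
    if "i < n" for i
  proof -
    have "(\<lambda>t. \<Sum>j<n. Gamma_seq n E c t i j *\<^sub>R v 1 j) \<longlonglongrightarrow> (\<Sum>j<n. Gamma n E c i j *\<^sub>R v 1 j)"
    proof (rule tendsto_sum)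
      fix j assume "j \<in> {..<n}"
      then have "j < n" by simp
      show "(\<lambda>t. Gamma_seq n E c t i j *\<^sub>R v 1 j) \<longlonglongrightarrow> Gamma n E c i j *\<^sub>R v 1 j"
        by (rule tendsto_scaleR[OF G[OF that \<open>j < n\<close>] tendsto_const])
    qed
    then have "(\<lambda>t. (x 0 i - mass_center n c (x 0)) + (\<Sum>j<n. Gamma_seq n E c t i j *\<^sub>R v 1 j))
        \<longlonglongrightarrow> (x 0 i - mass_center n c (x 0)) + (\<Sum>j<n. Gamma n E c i j *\<^sub>R v 1 j)"
      by (rule tendsto_add[OF tendsto_const])
    moreover have fe: "(\<lambda>t. x t i - mass_center n c (x t))
        = (\<lambda>t. (x 0 i - mass_center n c (x 0)) + (\<Sum>j<n. Gamma_seq n E c t i j *\<^sub>R v 1 j))"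
      by (rule ext) (rule eq[OF that])
    ultimately show ?thesis by (simp only: fe)
  qed
  show ?thesis using G part2 mx by blast
qed


end
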